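(* Let $G_1,\dots,G_n$ be torus grids, let $\Gamma=\{(f_{i,1},f_{i,2},\pi_i)\}_{i=1}^{n-1}$ be a gluing set for them, and let $G$ be the resulting composite grid. Let $T$ be a smooth transition system on $G$. Then there exists a set $\mathbb{T}=\{T_1,\dots,T_n\}$, with $T_i$ a smooth transition system of $G_i$, compatible with $\Gamma$, such that $T=\#\mathbb{T}$.
   Context: A torus grid is a $(k,l)$-regular grid on the torus: an $l$-regular graph ($l$ even) cellularly embedded on the torus whose geometric dual is $k$-regular. A face is cyclic if its boundary walk is a cycle. A gluing set for $G_1,\dots,G_n$ is a collection $\{(f_{i,1},f_{i,2},\pi_i)\}_{i=1}^{n-1}$ where $f_{i,1}$ is a cyclic face of $G_i$, $f_{i,2}$ is a cyclic face of $G_{i+1}$, $f_{i,2}\cap f_{i+1,1}=\emptyset$, and $\pi_i:\partial f_{i,1}\to\partial f_{i,2}$ is an isomorphism of cycle graphs. The composite grid $G$ is obtained by removing the interior of each face $f_{i,j}$ and gluing $\partial f_{i,1}$ to $\partial f_{i,2}$ according to $\pi_i$; it is embedded on the genus-$n$ surface. A transition at a vertex is a partition of its half-edges into pairs; it is smooth if it only pairs half-edges adjacent in the cyclic rotation; a smooth transition system is a choice of smooth transition at each vertex. For a vertex $v$ on a face $f$, a transition at $v$ is an $f$-transition if it pairs the two half-edges of $\partial f$ at $v$ with each other. Smooth transition systems $T_i$ of $G_i$ and $T_{i+1}$ of $G_{i+1}$ are compatible via $(f_{i,1},f_{i,2},\pi_i)$ if for every $v\in\partial f_{i,1}$, $T_i$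 is an $f_{i,1}$-transition at $v$ if and only if $T_{i+1}$ is not an $f_{i,2}$-transition at $\pi_i(v)$; $\mathbb{T}$ is compatible with $\Gamma$ if this holds for each $1\le i<n$. For compatible transitions $t_1$ at $v_1\in\partial f_{i,1}$ and $t_2$ at $v_2=\pi_i(v_1)$, with $v$ the glued vertex of $G$, the connected sum $t_1\# t_2$ at $v$ is defined as follows: every pair of $t_1$ or $t_2$ containing no half-edge of the glued face boundary stays a pair; exactly one of $t_1,t_2$ pairs the two boundary half-edges $h,h'$ (of its face) at its vertex with non-boundary half-edges $s,s'$ respectively, and in $t_1\#t_2$ one pairs $s$ and $s'$ with the half-edges of the glued cycle whose preimages are $h$ and $h'$ respectively. The connected sum $\#\mathbb{T}$ of a set $\mathbb{T}$ compatible with $\Gamma$ is the smooth transition system of $G$ which at each unglued vertex uses the transition of the corresponding $T_i$, and at each vertex formed by gluing $f_{i,1}$ to $f_{i,2}$ uses the connected sum of the transitions of $T_i$ and $T_{i+1}$ at its preimages. *)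

theory Defs
  imports Main
begin

text \<open>A cellularly embedded (multi)graph on an orientable surface is encoded as a
combinatorial map: a finite set of darts (half-edges), a fixed-point-free involution
alph (the two half-edges of an edge) and a permutation rot (the cyclic rotation of
the half-edges around each vertex).\<close>

record 'd cmap =
  darts :: "'d set"
  alph  :: "'d \<Rightarrow> 'd"
  rot   :: "'d \<Rightarrow> 'd"

definition cmap_wf :: "'d cmap \<Rightarrow> bool" where
  "cmap_wf M \<longleftrightarrow> finite (darts M) \<and> darts M \<noteq> {} \<and>
     bij_betw (rot M) (darts M) (darts M) \<and>
     (\<forall>d\<in>darts M. alph M d \<in> darts M \<and> alph M d \<noteq> d \<and> alph M (alph M d) = d)"

definition vert :: "'d cmap \<Rightarrow> 'd \<Rightarrow> 'd set" where
  "vert M d = {(rot M ^^ k) d | k. True}"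

definition verts :: "'d cmap \<Rightarrow> 'd set set" where
  "verts M = vert M ` darts M"

definition edges :: "'d cmap \<Rightarrow> 'd set set" where
  "edges M = (\<lambda>d. {d, alph M d}) ` darts M"

definition face_perm :: "'d cmap \<Rightarrow> 'd \<Rightarrow> 'd" where
  "face_perm M = rot M \<circ> alph M"

definition faces :: "'d cmap \<Rightarrow> 'd set set" where
  "faces M = (\<lambda>d. {(face_perm M ^^ k) d | k. True}) ` darts M"

definition map_steps :: "'d cmap \<Rightarrow> ('d \<times> 'd) set" where
  "map_steps M = {(x, y). x \<in> darts M \<and> (y = rot M x \<or> y = alph M x)}"

definition map_connected :: "'d cmap \<Rightarrow> bool" where
  "map_connected M \<longleftrightarrow> (\<forall>x\<in>darts M. \<forall>y\<in>darts M. (x, y) \<in> (map_steps M)\<^sup>*)"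

text \<open>(k,l)-regular grid on the torus: connected map of Euler characteristic 0
(i.e. a cellular embedding in the torus), l-regular with l even, all faces of length k
(dual is k-regular).\<close>

definition torus_grid :: "'d cmap \<Rightarrow> nat \<Rightarrow> nat \<Rightarrow> bool" where
  "torus_grid M k l \<longleftrightarrow> cmap_wf M \<and> map_connected M \<and>
     int (card (verts M)) - int (card (edges M)) + int (card (faces M)) = 0 \<and>
     even l \<and> (\<forall>v\<in>verts M. card v = l) \<and> (\<forall>f\<in>faces M. card f = k)"

definition bverts :: "'d cmap \<Rightarrow> 'd set \<Rightarrow> 'd set set" where
  "bverts M f = vert M ` f"

text \<open>The half-edges of the boundary of a face f (both half-edges of every boundary edge).\<close>
definition bdarts :: "'d cmap \<Rightarrow> 'd set \<Rightarrow> 'd set" where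
  "bdarts M f = f \<union> alph M ` f"

text \<open>Cyclic face: its boundary walk visits no vertex twice, i.e. is a cycle.\<close>
definition cyclic_face :: "'d cmap \<Rightarrow> 'd set \<Rightarrow> bool" where
  "cyclic_face M f \<longleftrightarrow> f \<in> faces M \<and> inj_on (vert M) f"

text \<open>Isomorphism of the boundary cycles, given on vertices: a bijection mapping
every boundary edge to a boundary edge.\<close>
definition cycle_iso :: "'d cmap \<Rightarrow> 'd set \<Rightarrow> 'd cmap \<Rightarrow> 'd set \<Rightarrow> ('d set \<Rightarrow> 'd set) \<Rightarrow> bool" where
  "cycle_iso M1 f1 M2 f2 g \<longleftrightarrow> bij_betw g (bverts M1 f1) (bverts M2 f2) \<and>
     (\<forall>d\<in>f1. \<exists>d'\<in>f2. {g (vert M1 d), g (vert M1 (alph M1 d))} =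
                       {vert M2 d', vert M2 (alph M2 d')})"

text \<open>Maps are indexed 0..n-1; gluing i (for i+1 < n) glues face F1 i of M i to face
F2 i of M (i+1) via gl i.\<close>
definition gluing_set :: "(nat \<Rightarrow> 'd cmap) \<Rightarrow> nat \<Rightarrow> (nat \<Rightarrow> 'd set) \<Rightarrow> (nat \<Rightarrow> 'd set)
    \<Rightarrow> (nat \<Rightarrow> 'd set \<Rightarrow> 'd set) \<Rightarrow> bool" where
  "gluing_set M n F1 F2 gl \<longleftrightarrow> (\<forall>i. Suc i < n \<longrightarrow>
     cyclic_face (M i) (F1 i) \<and> cyclic_face (M (Suc i)) (F2 i) \<and>
     cycle_iso (M i) (F1 i) (M (Suc i)) (F2 i) (gl i) \<and>
     (Suc (Suc i) < n \<longrightarrow> bverts (M (Suc i)) (F2 i) \<inter> bverts (M (Suc i)) (F1 (Suc i)) = {}))"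

text \<open>Half-edge (i,h) of the boundary of F1 i is identified with half-edge (i+1,k) of the
boundary of F2 i when they lie on corresponding edges at corresponding vertices.\<close>
definition glued :: "(nat \<Rightarrow> 'd cmap) \<Rightarrow> nat \<Rightarrow> (nat \<Rightarrow> 'd set) \<Rightarrow> (nat \<Rightarrow> 'd set)
    \<Rightarrow> (nat \<Rightarrow> 'd set \<Rightarrow> 'd set) \<Rightarrow> nat \<times> 'd \<Rightarrow> nat \<times> 'd \<Rightarrow> bool" where
  "glued M n F1 F2 gl = (\<lambda>(i, h) (j, k). j = Suc i \<and> j < n \<and>
     h \<in> bdarts (M i) (F1 i) \<and> k \<in> bdarts (M j) (F2 i) \<and>
     gl i (vert (M i) h) = vert (M j) k \<and>
     gl i (vert (M i) (alph (M i) h)) = vert (M j) (alph (M j) k))"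

text \<open>The half-edge of the composite grid containing a half-edge of some M i.\<close>
definition hcls :: "(nat \<Rightarrow> 'd cmap) \<Rightarrow> nat \<Rightarrow> (nat \<Rightarrow> 'd set) \<Rightarrow> (nat \<Rightarrow> 'd set)
    \<Rightarrow> (nat \<Rightarrow> 'd set \<Rightarrow> 'd set) \<Rightarrow> nat \<times> 'd \<Rightarrow> (nat \<times> 'd) set" where
  "hcls M n F1 F2 gl x = {x} \<union> {y. glued M n F1 F2 gl x y \<or> glued M n F1 F2 gl y x}"

definition gbd :: "(nat \<Rightarrow> 'd cmap) \<Rightarrow> nat \<Rightarrow> (nat \<Rightarrow> 'd set) \<Rightarrow> (nat \<Rightarrow> 'd set)
    \<Rightarrow> nat \<times> 'd \<Rightarrow> bool" where
  "gbd M n F1 F2 = (\<lambda>(i, d). i < n \<and>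
     ((Suc i < n \<and> d \<in> bdarts (M i) (F1 i)) \<or> (0 < i \<and> d \<in> bdarts (M i) (F2 (i - 1)))))"

definition composite_halfedges :: "(nat \<Rightarrow> 'd cmap) \<Rightarrow> nat \<Rightarrow> (nat \<Rightarrow> 'd set) \<Rightarrow> (nat \<Rightarrow> 'd set)
    \<Rightarrow> (nat \<Rightarrow> 'd set \<Rightarrow> 'd set) \<Rightarrow> (nat \<times> 'd) set set" where
  "composite_halfedges M n F1 F2 gl =
     hcls M n F1 F2 gl ` {(i, d). i < n \<and> d \<in> darts (M i)}"

text \<open>Adjacency of half-edges in the cyclic rotation of the composite grid: the rotation
at a glued vertex is obtained by removing the corner of the deleted face on both sides
and splicing the two rotations along the identified boundary half-edges.\<close>
definition composite_adj :: "(nat \<Rightarrow> 'd cmap) \<Rightarrow> nat \<Rightarrow> (nat \<Rightarrow> 'd set) \<Rightarrow> (nat \<Rightarrow> 'd set)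
    \<Rightarrow> (nat \<Rightarrow> 'd set \<Rightarrow> 'd set) \<Rightarrow> (nat \<times> 'd) set \<Rightarrow> (nat \<times> 'd) set \<Rightarrow> bool" where
  "composite_adj M n F1 F2 gl a b \<longleftrightarrow> a \<noteq> b \<and>
     (\<exists>i<n. \<exists>d\<in>darts (M i).
        \<not> (gbd M n F1 F2 (i, d) \<and> gbd M n F1 F2 (i, rot (M i) d)) \<and>
        {a, b} = {hcls M n F1 F2 gl (i, d), hcls M n F1 F2 gl (i, rot (M i) d)})"

text \<open>A smooth transition system on half-edge set H with rotation adjacency adj:
a partition of H into pairs of rotation-adjacent half-edges (such pairs lie at a
common vertex, so this is a choice of smooth transition at every vertex).\<close>
definition smooth_ts_gen :: "'h set \<Rightarrow> ('h \<Rightarrow> 'h \<Rightarrow> bool) \<Rightarrow> 'h set set \<Rightarrow> bool" where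
  "smooth_ts_gen H adj T \<longleftrightarrow>
     (\<forall>p\<in>T. \<exists>a\<in>H. \<exists>b\<in>H. adj a b \<and> p = {a, b}) \<and>
     (\<forall>a\<in>H. \<exists>!p. p \<in> T \<and> a \<in> p)"

definition rot_adj :: "'d cmap \<Rightarrow> 'd \<Rightarrow> 'd \<Rightarrow> bool" where
  "rot_adj M a b \<longleftrightarrow> a \<noteq> b \<and> (b = rot M a \<or> a = rot M b)"

definition smooth_ts :: "'d cmap \<Rightarrow> 'd set set \<Rightarrow> bool" where
  "smooth_ts M T \<longleftrightarrow> smooth_ts_gen (darts M) (rot_adj M) T"

text \<open>T is an f-transition at vertex v: it pairs the two half-edges of the boundary of f at v.\<close>
definition ftrans :: "'d cmap \<Rightarrow> 'd set \<Rightarrow> 'd set set \<Rightarrow> 'd set \<Rightarrow> bool" where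
  "ftrans M f T v \<longleftrightarrow> bdarts M f \<inter> v \<in> T"

definition compatible :: "(nat \<Rightarrow> 'd cmap) \<Rightarrow> nat \<Rightarrow> (nat \<Rightarrow> 'd set) \<Rightarrow> (nat \<Rightarrow> 'd set)
    \<Rightarrow> (nat \<Rightarrow> 'd set \<Rightarrow> 'd set) \<Rightarrow> (nat \<Rightarrow> 'd set set) \<Rightarrow> bool" where
  "compatible M n F1 F2 gl TT \<longleftrightarrow> (\<forall>i. Suc i < n \<longrightarrow>
     (\<forall>v\<in>bverts (M i) (F1 i).
        ftrans (M i) (F1 i) (TT i) v \<longleftrightarrow> \<not> ftrans (M (Suc i)) (F2 i) (TT (Suc i)) (gl i v)))"

text \<open>Connected sum: pairs containing no glued-boundary half-edge are kept; a pair {h,s}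
with h a glued-boundary half-edge and s not becomes {s, glued half-edge of h};
pairs of two boundary half-edges (f-transitions) are dropped.\<close>
definition csum :: "(nat \<Rightarrow> 'd cmap) \<Rightarrow> nat \<Rightarrow> (nat \<Rightarrow> 'd set) \<Rightarrow> (nat \<Rightarrow> 'd set)
    \<Rightarrow> (nat \<Rightarrow> 'd set \<Rightarrow> 'd set) \<Rightarrow> (nat \<Rightarrow> 'd set set) \<Rightarrow> (nat \<times> 'd) set set set" where
  "csum M n F1 F2 gl TT =
     {hcls M n F1 F2 gl ` Pair i ` p | i p. i < n \<and> p \<in> TT i \<and> (\<forall>x\<in>p. \<not> gbd M n F1 F2 (i, x))}
     \<union> {{hcls M n F1 F2 gl (i, s), hcls M n F1 F2 gl (i, h)} | i h s.
          i < n \<and> {h, s} \<in> TT i \<and> gbd M n F1 F2 (i, h) \<and> \<not> gbd M n F1 F2 (i, s)}"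

end

theory Submission
  imports Defs
begin

definition orb :: "('d \<Rightarrow> 'd) \<Rightarrow> 'd \<Rightarrow> 'd set" where
  "orb p x = {(p ^^ k) x | k. True}"

locale perm_on =
  fixes D :: "'d set" and p :: "'d \<Rightarrow> 'd"
  assumes fin: "finite D" and inj: "inj_on p D" and into: "\<And>x. x \<in> D \<Longrightarrow> p x \<in> D"
begin

lemma pow_in: "x \<in> D \<Longrightarrow> (p ^^ j) x \<in> D"
  by (induction j) (auto intro: into)

lemma pow_cancel: "x \<in> D \<Longrightarrow> y \<in> D \<Longrightarrow> (p ^^ j) x = (p ^^ j) y \<Longrightarrow> x = y"
proof (induction j)
  case 0 then show ?case by simp
next
  case (Suc j)
  have "(p ^^ j) x = (p ^^ j) y"
    using Suc.prems pow_in inj by (auto dest: inj_onD)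
  then show ?case using Suc by blast
qed

lemma orb_sub: "x \<in> D \<Longrightarrow> orb p x \<subseteq> D"
  unfolding orb_def using pow_in by auto

lemma self_in_orb: "x \<in> orb p x"
  unfolding orb_def by (auto intro: exI[of _ 0])

lemma pow_in_orb: "(p ^^ j) x \<in> orb p x"
  unfolding orb_def by auto

lemma period_exists: assumes x: "x \<in> D" shows "\<exists>m>0. (p ^^ m) x = x"
proof -
  let ?f = "\<lambda>j. (p ^^ j) x"
  have "\<not> inj_on ?f {..card D}"
  proof
    assume "inj_on ?f {..card D}"
    moreover have "?f ` {..card D} \<subseteq> D" using pow_in x by auto
    ultimately have "card {..card D} \<le> card D" using card_inj_on_le fin by blast
    then show False by simp
  qed
  then obtain a b where ab: "a \<le> card D" "b \<le> card D" "a \<noteq> b" "?f a = ?f b"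
    unfolding inj_on_def by auto
  { fix a b assume "a < b" "?f a = ?f b"
    then have "(p ^^ a) ((p ^^ (b - a)) x) = (p ^^ a) x"
      by (metis add_diff_inverse_nat funpow_add less_imp_not_less o_apply)
    then have "(p ^^ (b - a)) x = x" using pow_cancel pow_in x by blast
    then have "\<exists>m>0. (p ^^ m) x = x" using \<open>a < b\<close> by (intro exI[of _ "b - a"]) auto }
  then show ?thesis using ab by (metis linorder_neqE_nat)
qed

definition per where "per x = (LEAST m. m > 0 \<and> (p ^^ m) x = x)"

lemma per: assumes "x \<in> D" shows "per x > 0" "(p ^^ per x) x = x"
  using LeastI_ex[OF period_exists[OF assms]] unfolding per_def by auto

lemma per_min: "0 < m \<Longrightarrow> m < per x \<Longrightarrow> (p ^^ m) x \<noteq> x"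
  unfolding per_def using not_less_Least by blast

lemma pow_mult_per: "x \<in> D \<Longrightarrow> (p ^^ (q * per x)) x = x"
proof (induction q)
  case 0 then show ?case by simp
next
  case (Suc q)
  have "(p ^^ (Suc q * per x)) x = (p ^^ (q * per x)) ((p ^^ per x) x)"
    by (metis funpow_add o_apply mult_Suc add.commute)
  then show ?case using Suc per by simp
qed

lemma pow_mod: "x \<in> D \<Longrightarrow> (p ^^ j) x = (p ^^ (j mod per x)) x"
proof -
  assume x: "x \<in> D"
  have "j = j mod per x + (j div per x) * per x" by (metis mod_div_mult_eq)
  then have "(p ^^ j) x = (p ^^ (j mod per x)) ((p ^^ ((j div per x) * per x)) x)"
    by (metis funpow_add o_apply)
  then show ?thesis using pow_mult_per x by simp
qed

lemma pow_inj: assumes x: "x \<in> D" shows "inj_on (\<lambda>j. (p ^^ j) x) {..<per x}"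
proof -
  { fix a b assume ab: "a < b" "b < per x" "(p ^^ a) x = (p ^^ b) x"
    then have "(p ^^ a) ((p ^^ (b - a)) x) = (p ^^ a) x"
      by (metis add_diff_inverse_nat funpow_add less_imp_not_less o_apply)
    then have "(p ^^ (b - a)) x = x" using pow_cancel pow_in x by blast
    moreover have "0 < b - a" "b - a < per x" using ab by auto
    ultimately have False using per_min by blast }
  then show ?thesis unfolding inj_on_def by (metis lessThan_iff linorder_neqE_nat)
qed

lemma orb_eq: "x \<in> D \<Longrightarrow> orb p x = (\<lambda>j. (p ^^ j) x) ` {..<per x}"
proof
  assume x: "x \<in> D"
  show "orb p x \<subseteq> (\<lambda>j. (p ^^ j) x) ` {..<per x}"
  proof
    fix y assume "y \<in> orb p x"
    then obtain k where "y = (p ^^ k) x" unfolding orb_def by auto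
    then have "y = (p ^^ (k mod per x)) x" using pow_mod[OF x] by simp
    moreover have "k mod per x < per x" using per(1)[OF x] by simp
    ultimately show "y \<in> (\<lambda>j. (p ^^ j) x) ` {..<per x}" by auto
  qed
qed (auto simp: orb_def)

lemma card_orb: "x \<in> D \<Longrightarrow> card (orb p x) = per x"
  using orb_eq pow_inj card_image by (metis card_lessThan)

lemma orb_trans: assumes x: "x \<in> D" and y: "y \<in> orb p x" shows "orb p y \<subseteq> orb p x"
proof -
  obtain j where j: "y = (p ^^ j) x" using y unfolding orb_def by auto
  show ?thesis unfolding orb_def j by (auto simp: funpow_add[symmetric, THEN fun_cong, simplified] intro: exI[of _ "_ + j"])
qed

lemma orb_same: assumes x: "x \<in> D" and y: "y \<in> orb p x" shows "orb p y = orb p x"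
proof
  show "orb p y \<subseteq> orb p x" using orb_trans x y .
  obtain j where j: "y = (p ^^ j) x" using y unfolding orb_def by auto
  have "(p ^^ j) x = (p ^^ (j mod per x)) x" using pow_mod x by blast
  have "x = (p ^^ (per x - j mod per x)) y"
  proof -
    have "(p ^^ (per x - j mod per x)) y = (p ^^ (per x - j mod per x + j mod per x)) x"
      using j pow_mod[OF x, of j] by (simp add: funpow_add)
    also have "per x - j mod per x + j mod per x = per x"
      using per(1)[OF x] by simp
    finally show ?thesis using per(2)[OF x] by simp
  qed
  then have "x \<in> orb p y" using pow_in_orb by metis
  moreover have "y \<in> D" using y orb_sub x by blast
  ultimately show "orb p x \<subseteq> orb p y" using orb_trans by blast
qed

end

locale tg =
  fixes M :: "'d cmap" and k l :: nat
  assumes tg: "torus_grid M k l"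
begin

lemma wf: "cmap_wf M" using tg unfolding torus_grid_def by auto
lemma fin: "finite (darts M)" using wf unfolding cmap_wf_def by auto
lemma ne: "darts M \<noteq> {}" using wf unfolding cmap_wf_def by auto
lemma rot_bij: "bij_betw (rot M) (darts M) (darts M)" using wf unfolding cmap_wf_def by auto
lemma alph_in: "d \<in> darts M \<Longrightarrow> alph M d \<in> darts M" using wf unfolding cmap_wf_def by auto
lemma alph_neq: "d \<in> darts M \<Longrightarrow> alph M d \<noteq> d" using wf unfolding cmap_wf_def by auto
lemma alph_alph[simp]: "d \<in> darts M \<Longrightarrow> alph M (alph M d) = d" using wf unfolding cmap_wf_def by auto
lemma rot_in: "d \<in> darts M \<Longrightarrow> rot M d \<in> darts M" using bij_betwE[OF rot_bij] by blast
lemma rot_inj: "inj_on (rot M) (darts M)" using rot_bij unfolding bij_betw_def by (rule conjunct1)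
lemma rot_cancel: "x \<in> darts M \<Longrightarrow> y \<in> darts M \<Longrightarrow> rot M x = rot M y \<Longrightarrow> x = y"
  using inj_onD[OF rot_inj] by blast

lemma alph_inj: "inj_on (alph M) (darts M)"
proof (rule inj_onI)
  fix x y assume "x \<in> darts M" "y \<in> darts M" "alph M x = alph M y"
  then show "x = y" using alph_alph by metis
qed

sublocale rp: perm_on "darts M" "rot M"
  by unfold_locales (simp_all add: fin rot_inj rot_in)

lemma fp_inj: "inj_on (face_perm M) (darts M)"
proof (rule inj_onI)
  fix x y assume xy: "x \<in> darts M" "y \<in> darts M" "face_perm M x = face_perm M y"
  then have "rot M (alph M x) = rot M (alph M y)" by (simp add: face_perm_def)
  then have "alph M x = alph M y" using rot_cancel alph_in xy by blast
  then show "x = y" using xy alph_alph by metis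
qed

sublocale fp: perm_on "darts M" "face_perm M"
proof
  show "finite (darts M)" by (rule fin)
  show "inj_on (face_perm M) (darts M)" by (rule fp_inj)
  show "\<And>x. x \<in> darts M \<Longrightarrow> face_perm M x \<in> darts M" by (simp add: face_perm_def rot_in alph_in)
qed

lemma vert_orb: "vert M d = orb (rot M) d" unfolding vert_def orb_def by simp

lemma card_vert: "a \<in> darts M \<Longrightarrow> card (vert M a) = l"
  using tg unfolding torus_grid_def verts_def by auto

lemma per_l: "a \<in> darts M \<Longrightarrow> rp.per a = l"
  using card_vert rp.card_orb vert_orb by metis

lemma l_pos: "l > 0" using ne per_l rp.per(1) by blast
lemma l_even: "even l" using tg unfolding torus_grid_def by auto
lemma l_ge2: "l \<ge> 2"
proof -
  have "l \<noteq> 1" using l_even by auto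
  then show ?thesis using l_pos by linarith
qed

lemma rot_neq: "a \<in> darts M \<Longrightarrow> rot M a \<noteq> a"
  using rp.per_min[of 1 a] per_l l_ge2 by auto

lemma vert_same: "a \<in> darts M \<Longrightarrow> x \<in> vert M a \<Longrightarrow> vert M x = vert M a"
  using rp.orb_same vert_orb by metis

lemma vert_in: "a \<in> darts M \<Longrightarrow> x \<in> vert M a \<Longrightarrow> x \<in> darts M"
  using rp.orb_sub vert_orb by blast

lemma self_vert: "a \<in> vert M a" using rp.self_in_orb vert_orb by metis

lemma rot_vert: "a \<in> vert M a \<Longrightarrow> rot M a \<in> vert M a"
  using rp.pow_in_orb[of 1 a] vert_orb by simp

lemma vert_rot: "a \<in> darts M \<Longrightarrow> vert M (rot M a) = vert M a"
  using vert_same rot_vert self_vert by blast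

lemma vert_pow: "a \<in> darts M \<Longrightarrow> (rot M ^^ j) a \<in> vert M a"
  using rp.pow_in_orb vert_orb by metis

lemma rot_l: "a \<in> darts M \<Longrightarrow> (rot M ^^ l) a = a" using rp.per per_l by metis

lemma rot_mod: "a \<in> darts M \<Longrightarrow> (rot M ^^ j) a = (rot M ^^ (j mod l)) a" using rp.pow_mod per_l by metis

lemma rot_injl: "a \<in> darts M \<Longrightarrow> inj_on (\<lambda>j. (rot M ^^ j) a) {..<l}" using rp.pow_inj per_l by metis

lemma vert_eq: "a \<in> darts M \<Longrightarrow> vert M a = (\<lambda>j. (rot M ^^ j) a) ` {..<l}" using rp.orb_eq per_l vert_orb by metis

section \<open>Euler\<close>

lemma darts_edges: "card (darts M) = 2 * card (edges M)"
proof -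
  have U: "\<Union> (edges M) = darts M" unfolding edges_def using alph_in by auto
  have pd: "pairwise disjnt (edges M)"
  proof (unfold pairwise_def, intro ballI impI)
    fix A B assume A: "A \<in> edges M" and B: "B \<in> edges M" and ne: "A \<noteq> B"
    obtain a where a: "a \<in> darts M" "A = {a, alph M a}" using A unfolding edges_def by auto
    obtain b where b: "b \<in> darts M" "B = {b, alph M b}" using B unfolding edges_def by auto
    show "disjnt A B"
    proof (rule ccontr)
      assume "\<not> disjnt A B"
      then have "a = b \<or> a = alph M b \<or> alph M a = b \<or> alph M a = alph M b"
        using a b unfolding disjnt_def by auto
      then have "A = B"
      proof (elim disjE)
        assume "a = alph M b" then show "A = B" using a b by (simp add: insert_commute)
      next
        assume h: "alph M a = b" then have "alph M b = a" using a by auto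
        then show "A = B" using a b h by (simp add: insert_commute)
      next
        assume "alph M a = alph M b" then have "a = b" using a b alph_alph by metis
        then show "A = B" using a b by simp
      qed (use a b in simp)
      then show False using ne by simp
    qed
  qed
  have "card (\<Union> (edges M)) = sum card (edges M)"
    by (rule card_Union_disjoint[OF pd]) (auto simp: edges_def)
  also have "\<dots> = sum (\<lambda>_. 2) (edges M)"
  proof (rule sum.cong)
    fix A assume "A \<in> edges M"
    then obtain a where a: "a \<in> darts M" "A = {a, alph M a}" unfolding edges_def by auto
    then show "card A = 2" using alph_neq[OF a(1)] by auto
  qed simp
  finally show ?thesis using U by simp
qed

lemma face_orb: "f \<in> faces M \<Longrightarrow> \<exists>d\<in>darts M. f = orb (face_perm M) d"
  unfolding faces_def orb_def by auto

lemma darts_faces: "card (darts M) \<le> k * card (faces M)"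
proof -
  have U: "\<Union> (faces M) = darts M"
  proof
    show "\<Union> (faces M) \<subseteq> darts M" using face_orb fp.orb_sub by blast
    show "darts M \<subseteq> \<Union> (faces M)"
    proof
      fix d assume d: "d \<in> darts M"
      have "d \<in> {(face_perm M ^^ k) d | k. True}" by (auto intro: exI[of _ 0])
      moreover have "{(face_perm M ^^ k) d | k. True} \<in> faces M" using d unfolding faces_def by blast
      ultimately show "d \<in> \<Union> (faces M)" by blast
    qed
  qed
  have "card (\<Union> (faces M)) \<le> sum card (faces M)" by (rule card_Union_le_sum_card)
  also have "\<dots> = sum (\<lambda>_. k) (faces M)"
    using tg unfolding torus_grid_def by (intro sum.cong) auto
  finally show ?thesis using U by (simp add: mult.commute)
qed

lemma k_ge3: "k \<ge> 3"
proof (rule ccontr)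
  assume "\<not> ?thesis"
  have "verts M \<noteq> {}" using ne unfolding verts_def by auto
  moreover have "finite (verts M)" using fin unfolding verts_def by auto
  ultimately have "card (verts M) \<ge> 1" by (simp add: Suc_leI card_gt_0_iff)
  moreover have "int (card (verts M)) - int (card (edges M)) + int (card (faces M)) = 0"
    using tg unfolding torus_grid_def by auto
  moreover have "card (darts M) \<le> 2 * card (faces M)"
  proof -
    have "k \<le> 2" using \<open>\<not> k \<ge> 3\<close> by simp
    then have "k * card (faces M) \<le> 2 * card (faces M)" by (rule mult_le_mono1)
    then show ?thesis using darts_faces by linarith
  qed
  ultimately show False using darts_edges by linarith
qed

section \<open>Faces\<close>

definition pred where "pred e = (face_perm M ^^ (k - 1)) e"

context
  fixes f assumes cf: "cyclic_face M f"
begin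

lemma f_face: "f \<in> faces M" using cf unfolding cyclic_face_def by auto
lemma f_inj: "inj_on (vert M) f" using cf unfolding cyclic_face_def by auto
lemma card_f: "card f = k" using tg f_face unfolding torus_grid_def by auto

lemma f_sub: "f \<subseteq> darts M" using face_orb[OF f_face] fp.orb_sub by blast

lemma f_orb: "e \<in> f \<Longrightarrow> orb (face_perm M) e = f"
  using face_orb[OF f_face] fp.orb_same by metis

lemma per_k: "e \<in> f \<Longrightarrow> fp.per e = k"
  using f_orb card_f fp.card_orb f_sub by (metis subsetD)

lemma fp_in: "e \<in> f \<Longrightarrow> (face_perm M ^^ j) e \<in> f"
  using f_orb fp.pow_in_orb by metis

lemma fp_in1: "e \<in> f \<Longrightarrow> face_perm M e \<in> f"
  using fp_in[of e 1] by simp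

lemma pred_in: "e \<in> f \<Longrightarrow> pred e \<in> f" unfolding pred_def using fp_in by blast

lemma fp_pred: "e \<in> f \<Longrightarrow> face_perm M (pred e) = e"
proof -
  assume e: "e \<in> f"
  have "face_perm M (pred e) = (face_perm M ^^ Suc (k - 1)) e" unfolding pred_def by simp
  also have "Suc (k - 1) = k" using k_ge3 by simp
  finally show ?thesis using fp.per(2)[of e] per_k e f_sub by auto
qed

lemma rot_alph_pred: "e \<in> f \<Longrightarrow> rot M (alph M (pred e)) = e"
  using fp_pred unfolding face_perm_def by simp

lemma fp_neq_pred: "e \<in> f \<Longrightarrow> face_perm M e \<noteq> pred e"
proof
  assume e: "e \<in> f" and eq: "face_perm M e = pred e"
  have "(\<lambda>j. (face_perm M ^^ j) e) 1 = (\<lambda>j. (face_perm M ^^ j) e) (k - 1)"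
    using eq unfolding pred_def by simp
  moreover have "inj_on (\<lambda>j. (face_perm M ^^ j) e) {..<k}"
    using fp.pow_inj per_k e f_sub by (metis subsetD)
  ultimately have "(1::nat) = k - 1" using k_ge3 by (auto dest!: inj_onD[where x=1 and y="k-1"])
  then show False using k_ge3 by simp
qed

lemma fp_neq: "e \<in> f \<Longrightarrow> face_perm M e \<noteq> e"
  using fp.per_min[of 1 e] per_k k_ge3 by auto

lemma pred_neq: "e \<in> f \<Longrightarrow> pred e \<noteq> e"
  using fp_pred fp_neq pred_in by metis

lemma vert_alph: "d \<in> darts M \<Longrightarrow> vert M (alph M d) = vert M (face_perm M d)"
  using vert_rot alph_in unfolding face_perm_def by simp

lemma e_in: "e \<in> f \<Longrightarrow> e \<in> darts M" using f_sub by blast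

lemma bd_vert: "e \<in> f \<Longrightarrow> bdarts M f \<inter> vert M e = {alph M (pred e), e}"
proof
  assume e: "e \<in> f"
  show "bdarts M f \<inter> vert M e \<subseteq> {alph M (pred e), e}"
  proof
    fix x assume x: "x \<in> bdarts M f \<inter> vert M e"
    then have vx: "vert M x = vert M e" using vert_same e_in e by blast
    show "x \<in> {alph M (pred e), e}"
    proof (cases "x \<in> f")
      case True then show ?thesis using vx f_inj e by (auto dest: inj_onD)
    next
      case False
      then obtain d where d: "d \<in> f" "x = alph M d" using x unfolding bdarts_def by auto
      have "vert M (face_perm M d) = vert M e" using vx d vert_alph e_in by metis
      then have "face_perm M d = e" using f_inj fp_in1 d e by (auto dest: inj_onD)
      then have "face_perm M d = face_perm M (pred e)" using fp_pred e by simp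
      then have "d = pred e" using fp.inj d pred_in e e_in by (auto dest: inj_onD)
      then show ?thesis using d by simp
    qed
  qed
next
  assume e: "e \<in> f"
  have "vert M (alph M (pred e)) = vert M e"
    using vert_alph fp_pred pred_in e e_in by metis
  then have "alph M (pred e) \<in> vert M e" using self_vert by metis
  then show "{alph M (pred e), e} \<subseteq> bdarts M f \<inter> vert M e"
    using e pred_in self_vert unfolding bdarts_def by auto
qed

lemma vert_alph_neq: "e \<in> f \<Longrightarrow> vert M (alph M e) \<noteq> vert M (alph M (alph M (pred e)))"
proof
  assume e: "e \<in> f" and eq: "vert M (alph M e) = vert M (alph M (alph M (pred e)))"
  then have "vert M (face_perm M e) = vert M (pred e)"
    using vert_alph e_in pred_in by (metis alph_alph)
  then have "face_perm M e = pred e" using f_inj fp_in1 pred_in e by (auto dest: inj_onD)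
  then show False using fp_neq_pred e by simp
qed

lemma bd_cases: "x \<in> bdarts M f \<Longrightarrow> \<exists>e\<in>f. x = alph M (pred e) \<or> x = e"
proof -
  assume x: "x \<in> bdarts M f"
  show ?thesis
  proof (cases "x \<in> f")
    case True then show ?thesis by blast
  next
    case False
    then obtain d where d: "d \<in> f" "x = alph M d" using x unfolding bdarts_def by auto
    have "face_perm M (pred (face_perm M d)) = face_perm M d" using fp_pred fp_in1 d by blast
    moreover have "pred (face_perm M d) \<in> darts M" "d \<in> darts M"
      using pred_in fp_in1 d e_in by auto
    ultimately have "pred (face_perm M d) = d"
      using inj_onD[OF fp.inj] by blast
    then show ?thesis using d fp_in1 by metis
  qed
qed

lemma bd_darts: "x \<in> bdarts M f \<Longrightarrow> x \<in> darts M"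
  using f_sub alph_in unfolding bdarts_def by auto

lemma bd_alph: "x \<in> bdarts M f \<Longrightarrow> alph M x \<in> bdarts M f"
  unfolding bdarts_def using f_sub by auto

lemma bd_bverts: "x \<in> bdarts M f \<Longrightarrow> vert M x \<in> bverts M f"
proof -
  assume x: "x \<in> bdarts M f"
  then obtain e where e: "e \<in> f" "x = alph M (pred e) \<or> x = e" using bd_cases by blast
  have "vert M (alph M (pred e)) = vert M e"
    using vert_alph fp_pred pred_in e e_in by metis
  then show ?thesis using e unfolding bverts_def by auto
qed

lemma bd_vert_ne: "x \<in> bdarts M f \<Longrightarrow> vert M x \<noteq> vert M (alph M x)"
proof -
  assume x: "x \<in> bdarts M f"
  then obtain e where e: "e \<in> f" "x = alph M (pred e) \<or> x = e" using bd_cases by blast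
  have v1: "vert M (alph M (pred e)) = vert M e"
    using vert_alph fp_pred pred_in e e_in by metis
  show ?thesis using e(2)
  proof
    assume "x = alph M (pred e)"
    then have "vert M x = vert M e" "vert M (alph M x) = vert M (pred e)"
      using v1 alph_alph e_in pred_in e by auto
    moreover have "vert M e \<noteq> vert M (pred e)"
    proof
      assume "vert M e = vert M (pred e)"
      then have "e = pred e" using inj_onD[OF f_inj] pred_in e by blast
      then show False using pred_neq e by metis
    qed
    ultimately show ?thesis by simp
  next
    assume "x = e"
    have "vert M (alph M e) = vert M (face_perm M e)" using vert_alph e_in e by blast
    moreover have "vert M e \<noteq> vert M (face_perm M e)"
    proof
      assume "vert M e = vert M (face_perm M e)"
      then have "e = face_perm M e" using inj_onD[OF f_inj] fp_in1 e by blast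
      then show False using fp_neq e by metis
    qed
    ultimately show ?thesis using \<open>x = e\<close> by simp
  qed
qed

lemma pred_alph_neq: "e \<in> f \<Longrightarrow> alph M (pred e) \<noteq> e"
  using rot_alph_pred rot_neq e_in by metis


lemma bd_det:
  assumes x: "x \<in> bdarts M f" and y: "y \<in> bdarts M f" and v: "vert M x = vert M y"
    and va: "vert M (alph M x) = vert M (alph M y)"
  shows "x = y"
proof -
  obtain e where e: "e \<in> f" "x = alph M (pred e) \<or> x = e" using bd_cases x by blast
  have xe: "x \<in> vert M e" using bd_vert[OF e(1)] e(2) by auto
  have "vert M x = vert M e" using vert_same[OF e_in[OF e(1)] xe] .
  then have "y \<in> vert M e" using v self_vert by metis
  then have ye: "y = alph M (pred e) \<or> y = e" using bd_vert[OF e(1)] y by auto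
  show ?thesis
  proof (rule ccontr)
    assume "x \<noteq> y"
    then have "(x = alph M (pred e) \<and> y = e) \<or> (x = e \<and> y = alph M (pred e))" using e(2) ye by auto
    then show False using va vert_alph_neq[OF e(1)] by metis
  qed
qed

end
end

lemma set2_eq: "{a, b} = {a, c} \<Longrightarrow> b = c" by (metis doubleton_eq_iff)

lemma set2_eq': "{a, b} = {b, c} \<Longrightarrow> a = c" by (metis doubleton_eq_iff)

lemma rot_adj_sym: "rot_adj M a b = rot_adj M b a" unfolding rot_adj_def by auto

locale setting =
  fixes M :: "nat \<Rightarrow> 'd cmap" and n :: nat
    and F1 F2 :: "nat \<Rightarrow> 'd set" and gl :: "nat \<Rightarrow> 'd set \<Rightarrow> 'd set"
    and T :: "(nat \<times> 'd) set set set"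
  assumes a1: "\<forall>i<n. \<exists>k l. torus_grid (M i) k l"
    and a2: "gluing_set M n F1 F2 gl"
    and a3: "smooth_ts_gen (composite_halfedges M n F1 F2 gl) (composite_adj M n F1 F2 gl) T"
begin

abbreviation C where "C i a \<equiv> hcls M n F1 F2 gl (i, a)"
abbreviation G where "G i a \<equiv> gbd M n F1 F2 (i, a)"
abbreviation H where "H \<equiv> composite_halfedges M n F1 F2 gl"
abbreviation D where "D i \<equiv> darts (M i)"
abbreviation R where "R i \<equiv> rot (M i)"
abbreviation V where "V i \<equiv> vert (M i)"

definition kk where "kk i = (SOME k. \<exists>l. torus_grid (M i) k l)"
definition ll where "ll i = (SOME l. torus_grid (M i) (kk i) l)"

lemma tgi: "i < n \<Longrightarrow> tg (M i) (kk i) (ll i)"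
proof -
  assume "i < n"
  then have "\<exists>k l. torus_grid (M i) k l" using a1 by blast
  then have "\<exists>l. torus_grid (M i) (kk i) l" unfolding kk_def by (rule someI_ex)
  then have "torus_grid (M i) (kk i) (ll i)" unfolding ll_def by (rule someI_ex)
  then show ?thesis by (simp add: tg_def)
qed

abbreviation Pd where "Pd i e \<equiv> tg.pred (M i) (kk i) e"

lemma glue: "Suc i < n \<Longrightarrow> cyclic_face (M i) (F1 i) \<and> cyclic_face (M (Suc i)) (F2 i) \<and>
     cycle_iso (M i) (F1 i) (M (Suc i)) (F2 i) (gl i) \<and>
     (Suc (Suc i) < n \<longrightarrow> bverts (M (Suc i)) (F2 i) \<inter> bverts (M (Suc i)) (F1 (Suc i)) = {})"
  using a2 unfolding gluing_set_def by blast

lemma dis: "0 < i \<Longrightarrow> Suc i < n \<Longrightarrow> bverts (M i) (F2 (i - 1)) \<inter> bverts (M i) (F1 i) = {}"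
  using glue[of "i - 1"] by simp

lemma glued_def2: "glued M n F1 F2 gl (i, h) (j, k) \<longleftrightarrow> j = Suc i \<and> j < n \<and>
     h \<in> bdarts (M i) (F1 i) \<and> k \<in> bdarts (M j) (F2 i) \<and>
     gl i (vert (M i) h) = vert (M j) k \<and>
     gl i (vert (M i) (alph (M i) h)) = vert (M j) (alph (M j) k)"
  unfolding glued_def by simp

lemma gbd_def2: "G i d \<longleftrightarrow> i < n \<and>
     ((Suc i < n \<and> d \<in> bdarts (M i) (F1 i)) \<or> (0 < i \<and> d \<in> bdarts (M i) (F2 (i - 1))))"
  unfolding gbd_def by simp

lemma hcls_def2: "C i a = {(i, a)} \<union> {y. glued M n F1 F2 gl (i, a) y \<or> glued M n F1 F2 gl y (i, a)}"
  unfolding hcls_def by simp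

lemma glued_gbd1: "glued M n F1 F2 gl (i, a) y \<Longrightarrow> G i a"
proof -
  assume h: "glued M n F1 F2 gl (i, a) y"
  obtain j k where y: "y = (j, k)" by (cases y)
  have "Suc i < n" "a \<in> bdarts (M i) (F1 i)" using h unfolding y glued_def2 by auto
  then show "G i a" unfolding gbd_def2 by simp
qed

lemma glued_gbd2: "glued M n F1 F2 gl y (i, a) \<Longrightarrow> G i a"
proof -
  assume h: "glued M n F1 F2 gl y (i, a)"
  obtain j k where y: "y = (j, k)" by (cases y)
  have "i = Suc j" "i < n" "a \<in> bdarts (M i) (F2 j)" using h unfolding y glued_def2 by auto
  then show "G i a" unfolding gbd_def2 by simp
qed

lemma C_single: "\<not> G i a \<Longrightarrow> C i a = {(i, a)}"
  unfolding hcls_def2 using glued_gbd1 glued_gbd2 by blast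

lemma C_self: "(i, a) \<in> C i a" unfolding hcls_def2 by simp

lemma C_mem: "(j, b) \<in> C i a \<Longrightarrow> (j, b) = (i, a) \<or> glued M n F1 F2 gl (i, a) (j, b) \<or> glued M n F1 F2 gl (j, b) (i, a)"
  unfolding hcls_def2 by blast

lemma C_inj: "C i a = C i b \<Longrightarrow> a = b"
proof -
  assume "C i a = C i b"
  then have "(i, a) \<in> C i b" using C_self by metis
  then have "(i, a) = (i, b) \<or> glued M n F1 F2 gl (i, b) (i, a) \<or> glued M n F1 F2 gl (i, a) (i, b)"
    by (rule C_mem)
  then show "a = b" unfolding glued_def2 by auto
qed

lemma C_ng_eq: "\<not> G i a \<Longrightarrow> C j b = C i a \<Longrightarrow> j = i \<and> b = a"
proof -
  assume h: "\<not> G i a" "C j b = C i a"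
  have "(j, b) \<in> C i a" using C_self h(2) by metis
  then show ?thesis using C_single[OF h(1)] by simp
qed

lemma C_in_H: "i < n \<Longrightarrow> a \<in> D i \<Longrightarrow> C i a \<in> H"
  unfolding composite_halfedges_def by (intro imageI) simp

lemma a3u: "X \<in> H \<Longrightarrow> \<exists>!p. p \<in> T \<and> X \<in> p"
proof -
  assume X: "X \<in> H"
  have "\<forall>a\<in>H. \<exists>!p. p \<in> T \<and> a \<in> p" using a3 unfolding smooth_ts_gen_def by (rule conjunct2)
  then show ?thesis using X by (rule bspec)
qed

lemma T_uniq: "X \<in> H \<Longrightarrow> p \<in> T \<Longrightarrow> q \<in> T \<Longrightarrow> X \<in> p \<Longrightarrow> X \<in> q \<Longrightarrow> p = q"
  using a3u by blast

lemma T_ex: "X \<in> H \<Longrightarrow> \<exists>p. p \<in> T \<and> X \<in> p"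
  using a3u by blast

lemma T_adj: "p \<in> T \<Longrightarrow> \<exists>j<n. \<exists>d\<in>D j. \<not> (G j d \<and> G j (R j d)) \<and>
    p = {C j d, C j (R j d)} \<and> C j d \<noteq> C j (R j d)"
proof -
  assume p: "p \<in> T"
  have "\<forall>p\<in>T. \<exists>a\<in>H. \<exists>b\<in>H. composite_adj M n F1 F2 gl a b \<and> p = {a, b}"
    using a3 unfolding smooth_ts_gen_def by (rule conjunct1)
  then have "\<exists>a\<in>H. \<exists>b\<in>H. composite_adj M n F1 F2 gl a b \<and> p = {a, b}" using p by (rule bspec)
  then obtain X Y where XY: "composite_adj M n F1 F2 gl X Y" "p = {X, Y}"
    by (elim bexE conjE) (rule that)
  have "X \<noteq> Y \<and> (\<exists>j<n. \<exists>d\<in>D j. \<not> (G j d \<and> G j (R j d)) \<and>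
        {X, Y} = {C j d, C j (R j d)})"
    using XY(1) unfolding composite_adj_def .
  then obtain j d where jd: "X \<noteq> Y" "j < n" "d \<in> D j" "\<not> (G j d \<and> G j (R j d))"
    "{X, Y} = {C j d, C j (R j d)}"
    by (elim bexE conjE exE) (rule that)
  have ne: "C j d \<noteq> C j (R j d)"
  proof
    assume "C j d = C j (R j d)"
    then have "{X, Y} = {C j d}" using jd(5) by simp
    then have "X = C j d" "Y = C j d" by (simp_all add: doubleton_eq_iff)
    then show False using jd(1) by simp
  qed
  have "p = {C j d, C j (R j d)}" using XY(2) jd(5) by simp
  then show ?thesis using jd(2,3,4) ne by (intro exI[of _ j] conjI bexI[of _ d])
qed

definition bface where "bface i f \<longleftrightarrow> (Suc i < n \<and> f = F1 i) \<or> (0 < i \<and> i < n \<and> f = F2 (i - 1))"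

lemma bface_lt: "bface i f \<Longrightarrow> i < n" unfolding bface_def by auto

lemma bface_cyc: "bface i f \<Longrightarrow> cyclic_face (M i) f"
  unfolding bface_def using glue[of i] glue[of "i - 1"] by auto

lemma gbd_face: "G i a \<Longrightarrow> \<exists>f. bface i f \<and> a \<in> bdarts (M i) f"
  unfolding gbd_def2 bface_def by auto

lemma bface_gbd: "bface i f \<Longrightarrow> a \<in> bdarts (M i) f \<Longrightarrow> G i a"
  unfolding gbd_def2 bface_def by auto

lemma bv:
  assumes bf: "bface i f" and e: "e \<in> f" and x: "x \<in> V i e"
  shows "G i x \<longleftrightarrow> x = alph (M i) (Pd i e) \<or> x = e"
proof -
  have i: "i < n" using bface_lt bf by blast
  interpret t: tg "M i" "kk i" "ll i" using tgi[OF i] .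
  have cf: "cyclic_face (M i) f" using bface_cyc bf .
  have ed: "e \<in> D i" using t.e_in[OF cf e] .
  have vx: "V i x = V i e" using t.vert_same[OF ed x] .
  show ?thesis
  proof
    assume gx: "G i x"
    then obtain f' where f': "bface i f'" "x \<in> bdarts (M i) f'" using gbd_face by blast
    have cf': "cyclic_face (M i) f'" using bface_cyc f'(1) .
    have "f' = f"
    proof (rule ccontr)
      assume ne: "f' \<noteq> f"
      have "V i x \<in> bverts (M i) f'" using t.bd_bverts[OF cf' f'(2)] .
      moreover have "V i x \<in> bverts (M i) f" using vx e unfolding bverts_def by auto
      moreover have "0 < i \<and> Suc i < n \<and> {f, f'} = {F1 i, F2 (i - 1)}"
        using bf f'(1) ne unfolding bface_def by auto
      moreover have "bverts (M i) (F2 (i - 1)) \<inter> bverts (M i) (F1 i) = {}"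
        using dis calculation(3) by blast
      ultimately show False by (auto simp: doubleton_eq_iff)
    qed
    then have "x \<in> bdarts (M i) f \<inter> V i e" using f'(2) x by simp
    then show "x = alph (M i) (Pd i e) \<or> x = e" using t.bd_vert[OF cf e] by auto
  next
    assume "x = alph (M i) (Pd i e) \<or> x = e"
    then have "x \<in> bdarts (M i) f" using t.bd_vert[OF cf e] by auto
    then show "G i x" using bface_gbd bf by blast
  qed
qed

lemma bstruct:
  assumes i: "i < n" and a: "a \<in> D i" and g: "G i a"
  shows "\<exists>f e. bface i f \<and> e \<in> f \<and> (a = alph (M i) (Pd i e) \<or> a = e)"
proof -
  interpret t: tg "M i" "kk i" "ll i" using tgi[OF i] .
  obtain f where f: "bface i f" "a \<in> bdarts (M i) f" using gbd_face g by blast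
  obtain e where "e \<in> f" "a = alph (M i) (Pd i e) \<or> a = e"
    using t.bd_cases[OF bface_cyc[OF f(1)] f(2)] by blast
  then show ?thesis using f by blast
qed

lemma bstruct2:
  assumes bf: "bface i f" and e: "e \<in> f"
  defines "\<beta> \<equiv> alph (M i) (Pd i e)"
  shows "\<beta> \<in> D i" "R i \<beta> = e" "\<beta> \<noteq> e" "V i \<beta> = V i e" "\<beta> \<in> V i e" "e \<in> V i e"
    "\<forall>x\<in>V i \<beta>. G i x \<longleftrightarrow> x = \<beta> \<or> x = R i \<beta>"
proof -
  have i: "i < n" using bface_lt bf by blast
  interpret t: tg "M i" "kk i" "ll i" using tgi[OF i] .
  have cf: "cyclic_face (M i) f" using bface_cyc bf .
  show bd: "\<beta> \<in> D i" unfolding \<beta>_def using t.alph_in t.e_in[OF cf t.pred_in[OF cf e]] .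
  show re: "R i \<beta> = e" unfolding \<beta>_def using t.rot_alph_pred[OF cf e] .
  show "\<beta> \<noteq> e" unfolding \<beta>_def using t.pred_alph_neq[OF cf e] .
  show vb: "V i \<beta> = V i e" using t.vert_rot[OF bd] re by simp
  show "\<beta> \<in> V i e" using vb t.self_vert by metis
  show "e \<in> V i e" using t.self_vert .
  show "\<forall>x\<in>V i \<beta>. G i x \<longleftrightarrow> x = \<beta> \<or> x = R i \<beta>" using bv[OF bf e] vb re \<beta>_def by simp
qed

end

context setting begin

definition Am where "Am i y \<longleftrightarrow> (\<exists>x\<in>D i. rot_adj (M i) y x \<and> \<not> G i x \<and> {C i y, C i x} \<in> T)"

lemma parity:
  assumes i: "i < n" and bd: "\<beta> \<in> D i"
    and st: "\<forall>x\<in>V i \<beta>. G i x \<longleftrightarrow> x = \<beta> \<or> x = R i \<beta>"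
  shows "Am i \<beta> \<longleftrightarrow> Am i (R i \<beta>)"
proof -
  interpret t: tg "M i" "kk i" "ll i" using tgi[OF i] .
  define L where "L = ll i"
  define z where "z j = (R i ^^ j) \<beta>" for j
  have z0: "z 0 = \<beta>" unfolding z_def by simp
  have z1: "z 1 = R i \<beta>" unfolding z_def by simp
  have zL: "z L = \<beta>" unfolding z_def L_def using t.rot_l[OF bd] .
  have zD: "z j \<in> D i" for j unfolding z_def using t.rp.pow_in[OF bd] .
  have zS: "R i (z j) = z (Suc j)" for j unfolding z_def by simp
  have zV: "z j \<in> V i \<beta>" for j unfolding z_def using t.vert_pow[OF bd] .
  have zinj: "inj_on z {..<L}" unfolding z_def L_def using t.rot_injl[OF bd] .
  have Lev: "even L" and L2: "L \<ge> 2" unfolding L_def using t.l_even t.l_ge2 by auto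
  have zneq: "z a \<noteq> z b" if "a < L" "b < L" "a \<noteq> b" for a b
    using zinj that by (auto dest: inj_onD)
  have ng: "\<not> G i (z j)" if "2 \<le> j" "j < L" for j
  proof
    assume "G i (z j)"
    then have "z j = z 0 \<or> z j = z 1" using st zV[of j] z0 z1 by simp
    then show False
    proof
      assume "z j = z 0" then show False using zneq[of j 0] that by simp
    next
      assume "z j = z 1" then show False using zneq[of j 1] that by simp
    qed
  qed
  have g0: "G i (z 0)" using st zV[of 0] z0 by simp
  have g1: "G i (z 1)" using st zV[of 1] z1 z0 by simp
  define mf where "mf j \<longleftrightarrow> {C i (z j), C i (z (Suc j))} \<in> T" for j
  have step: "mf (Suc j) \<longleftrightarrow> \<not> mf j" if j1: "1 \<le> j" and jL: "Suc (Suc j) \<le> L" for j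
  proof -
    let ?y = "z (Suc j)"
    have ngy: "\<not> G i ?y" using ng j1 jL by simp
    have Cy: "C i ?y = {(i, ?y)}" using C_single ngy .
    have yH: "C i ?y \<in> H" using C_in_H[OF i zD] .
    have "\<not> (mf j \<and> mf (Suc j))"
    proof
      assume "mf j \<and> mf (Suc j)"
      then have "{C i (z j), C i ?y} = {C i ?y, C i (z (Suc (Suc j)))}"
        unfolding mf_def using T_uniq[OF yH] by blast
      then have "C i (z j) = C i (z (Suc (Suc j)))" by (rule set2_eq')
      then have e: "z j = z (Suc (Suc j))" by (rule C_inj)
      show False
      proof (cases "Suc (Suc j) = L")
        case True
        then have "z j = z 0" using e zL z0 by simp
        then show False using zneq[of j 0] j1 jL by simp
      next
        case False
        then show False using zneq[of j "Suc (Suc j)"] e jL by simp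
      qed
    qed
    moreover have "mf j \<or> mf (Suc j)"
    proof -
      obtain p where p: "p \<in> T" "C i ?y \<in> p" using T_ex[OF yH] by blast
      obtain j' d where jd: "j' < n" "d \<in> D j'" "p = {C j' d, C j' (R j' d)}"
        using T_adj[OF p(1)] by blast
      have "C j' d = C i ?y \<or> C j' (R j' d) = C i ?y" using p(2) jd(3) by auto
      then show ?thesis
      proof
        assume "C j' d = C i ?y"
        then have "j' = i" "d = ?y" using C_ng_eq[OF ngy] by auto
        then have "p = {C i ?y, C i (z (Suc (Suc j)))}" using jd(3) zS by simp
        then show ?thesis unfolding mf_def using p by simp
      next
        assume "C j' (R j' d) = C i ?y"
        then have ji: "j' = i" and rd: "R j' d = ?y" using C_ng_eq[OF ngy] by auto
        then have "d = z j" using t.rot_cancel jd(2) zD zS by metis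
        then have "p = {C i (z j), C i ?y}" using jd(3) rd ji by simp
        then show ?thesis unfolding mf_def using p by simp
      qed
    qed
    ultimately show ?thesis by blast
  qed
  have ind: "1 \<le> j \<longrightarrow> j < L \<longrightarrow> (mf j \<longleftrightarrow> (odd j \<longleftrightarrow> mf 1))" for j
  proof (induction j)
    case 0 then show ?case by simp
  next
    case (Suc j)
    show ?case
    proof (cases "j = 0")
      case True then show ?thesis by simp
    next
      case False
      show ?thesis
      proof (intro impI)
        assume "Suc j < L"
        then have "mf (Suc j) \<longleftrightarrow> \<not> mf j" using step[of j] False by simp
        then show "mf (Suc j) \<longleftrightarrow> (odd (Suc j) \<longleftrightarrow> mf 1)" using Suc.IH False \<open>Suc j < L\<close> by simp
      qed
    qed
  qed
  have zLm: "R i (z (L - 1)) = \<beta>" using zS[of "L - 1"] L2 zL by simp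
  have Ab: "Am i \<beta> \<longleftrightarrow> \<not> G i (z (L - 1)) \<and> mf (L - 1)"
  proof
    assume "Am i \<beta>"
    then obtain x where x: "x \<in> D i" "rot_adj (M i) \<beta> x" "\<not> G i x" "{C i \<beta>, C i x} \<in> T"
      unfolding Am_def by blast
    have "x \<noteq> R i \<beta>" using x(3) g1 z1 by auto
    then have "R i x = \<beta>" using x(2) unfolding rot_adj_def by auto
    then have "x = z (L - 1)" using t.rot_cancel x(1) zD zLm by metis
    then show "\<not> G i (z (L - 1)) \<and> mf (L - 1)" using x L2 zL unfolding mf_def
      by (simp add: insert_commute)
  next
    assume h: "\<not> G i (z (L - 1)) \<and> mf (L - 1)"
    have "z (L - 1) \<noteq> \<beta>" using zneq[of "L - 1" 0] L2 z0 by simp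
    then have "rot_adj (M i) \<beta> (z (L - 1))" using zLm unfolding rot_adj_def by auto
    then show "Am i \<beta>" unfolding Am_def using h zD L2 zL unfolding mf_def
      by (auto simp: insert_commute intro!: bexI[of _ "z (L - 1)"])
  qed
  have Ar: "Am i (R i \<beta>) \<longleftrightarrow> \<not> G i (z 2) \<and> mf 1"
  proof
    assume "Am i (R i \<beta>)"
    then obtain x where x: "x \<in> D i" "rot_adj (M i) (R i \<beta>) x" "\<not> G i x" "{C i (R i \<beta>), C i x} \<in> T"
      unfolding Am_def by blast
    have "x \<noteq> \<beta>" using x(3) g0 z0 by auto
    moreover have "R i x = R i \<beta> \<Longrightarrow> x = \<beta>" using t.rot_cancel x(1) bd by blast
    ultimately have "x = R i (R i \<beta>)" using x(2) unfolding rot_adj_def by auto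
    then have "x = z 2" using zS[of 1] z1 by (simp add: numeral_2_eq_2)
    then show "\<not> G i (z 2) \<and> mf 1" using x z1 unfolding mf_def by (simp add: numeral_2_eq_2)
  next
    assume h: "\<not> G i (z 2) \<and> mf 1"
    have "rot_adj (M i) (z 1) (z 2)" using zS[of 1] t.rot_neq[OF zD[of 1]] unfolding rot_adj_def
      by (simp add: numeral_2_eq_2)
    then show "Am i (R i \<beta>)" unfolding Am_def using h zD z1 unfolding mf_def
      by (auto simp: numeral_2_eq_2 intro!: bexI[of _ "z 2"])
  qed
  show ?thesis
  proof (cases "L = 2")
    case True
    then show ?thesis using Ab Ar g0 g1 zL z0 by (simp add: numeral_2_eq_2)
  next
    case False
    then have L4: "L \<ge> 4" using Lev L2 by presburger
    have "\<not> G i (z (L - 1))" "\<not> G i (z 2)" using ng L4 by auto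
    moreover have "mf (L - 1) \<longleftrightarrow> mf 1" using ind[of "L - 1"] L4 Lev by simp
    ultimately show ?thesis using Ab Ar by simp
  qed
qed

end

context setting begin

lemma cls:
  assumes i: "Suc i < n" and b: "\<beta> \<in> bdarts (M i) (F1 i)"
  shows "\<exists>\<gamma>. \<gamma> \<in> bdarts (M (Suc i)) (F2 i) \<and> C i \<beta> = {(i, \<beta>), (Suc i, \<gamma>)} \<and>
     C (Suc i) \<gamma> = C i \<beta> \<and> V (Suc i) \<gamma> = gl i (V i \<beta>)"
proof -
  have i0: "i < n" using i by simp
  interpret t1: tg "M i" "kk i" "ll i" using tgi[OF i0] .
  interpret t2: tg "M (Suc i)" "kk (Suc i)" "ll (Suc i)" using tgi[OF i] .
  have gl: "cyclic_face (M i) (F1 i)" "cyclic_face (M (Suc i)) (F2 i)"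
    "cycle_iso (M i) (F1 i) (M (Suc i)) (F2 i) (gl i)"
    "Suc (Suc i) < n \<longrightarrow> bverts (M (Suc i)) (F2 i) \<inter> bverts (M (Suc i)) (F1 (Suc i)) = {}"
    using glue[OF i] by auto
  note c1 = gl(1) and c2 = gl(2)
  have bij: "bij_betw (gl i) (bverts (M i) (F1 i)) (bverts (M (Suc i)) (F2 i))"
    and edge: "\<forall>d\<in>F1 i. \<exists>d'\<in>F2 i. {gl i (V i d), gl i (V i (alph (M i) d))} =
                       {V (Suc i) d', V (Suc i) (alph (M (Suc i)) d')}"
    using gl(3) unfolding cycle_iso_def by auto
  have ginj: "inj_on (gl i) (bverts (M i) (F1 i))" using bij bij_betw_def by blast
  define u where "u = V i \<beta>"
  define u' where "u' = V i (alph (M i) \<beta>)"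
  have ub: "u \<in> bverts (M i) (F1 i)" unfolding u_def using t1.bd_bverts[OF c1 b] .
  have ub': "u' \<in> bverts (M i) (F1 i)" unfolding u'_def using t1.bd_bverts[OF c1 t1.bd_alph[OF c1 b]] .
  have uu: "u \<noteq> u'" unfolding u_def u'_def using t1.bd_vert_ne[OF c1 b] .
  have guu: "gl i u \<noteq> gl i u'" using ginj ub ub' uu by (auto dest: inj_onD)
  obtain d where d: "d \<in> F1 i" "{V i d, V i (alph (M i) d)} = {u, u'}"
  proof -
    obtain e where e: "e \<in> F1 i" "\<beta> = alph (M i) (Pd i e) \<or> \<beta> = e" using t1.bd_cases[OF c1 b] by blast
    show ?thesis using e(2)
    proof
      assume h: "\<beta> = alph (M i) (Pd i e)"
      have pe: "Pd i e \<in> F1 i" using t1.pred_in[OF c1 e(1)] .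
      have "alph (M i) \<beta> = Pd i e" using h t1.alph_alph t1.e_in[OF c1 pe] by simp
      then have "{V i (Pd i e), V i (alph (M i) (Pd i e))} = {u, u'}"
        unfolding u_def u'_def using h by (simp add: insert_commute)
      then show ?thesis using that pe by blast
    next
      assume h: "\<beta> = e"
      show ?thesis using that[of e] e(1) h unfolding u_def u'_def by simp
    qed
  qed
  obtain d' where d': "d' \<in> F2 i" "{gl i u, gl i u'} = {V (Suc i) d', V (Suc i) (alph (M (Suc i)) d')}"
  proof -
    obtain d' where "d' \<in> F2 i" "{gl i (V i d), gl i (V i (alph (M i) d))} =
                       {V (Suc i) d', V (Suc i) (alph (M (Suc i)) d')}" using edge d(1) by blast
    moreover have "{gl i (V i d), gl i (V i (alph (M i) d))} = {gl i u, gl i u'}"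
      using d(2) by (metis image_insert image_empty)
    ultimately show ?thesis using that by simp
  qed
  have d'b: "d' \<in> bdarts (M (Suc i)) (F2 i)" using d'(1) unfolding bdarts_def by simp
  obtain \<gamma> where g: "\<gamma> \<in> bdarts (M (Suc i)) (F2 i)" "V (Suc i) \<gamma> = gl i u"
    "V (Suc i) (alph (M (Suc i)) \<gamma>) = gl i u'"
  proof (cases "V (Suc i) d' = gl i u")
    case True
    then have "V (Suc i) (alph (M (Suc i)) d') = gl i u'" using d'(2) guu by (auto simp: doubleton_eq_iff)
    then show ?thesis using that d'b True by blast
  next
    case False
    then have h: "V (Suc i) d' = gl i u'" "V (Suc i) (alph (M (Suc i)) d') = gl i u"
      using d'(2) by (auto simp: doubleton_eq_iff)
    have "alph (M (Suc i)) (alph (M (Suc i)) d') = d'"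
      using t2.alph_alph t2.e_in[OF c2 d'(1)] by simp
    then show ?thesis using that[of "alph (M (Suc i)) d'"] t2.bd_alph[OF c2 d'b] h by simp
  qed
  have gl1: "glued M n F1 F2 gl (i, \<beta>) (Suc i, \<gamma>)"
    unfolding glued_def2 using i b g unfolding u_def u'_def by simp
  have un1: "k = \<gamma>" if "glued M n F1 F2 gl (i, \<beta>) (j, k)" for j k
  proof -
    have h: "j = Suc i" "k \<in> bdarts (M (Suc i)) (F2 i)" "gl i u = V (Suc i) k"
      "gl i u' = V (Suc i) (alph (M (Suc i)) k)"
      using that unfolding glued_def2 u_def u'_def by auto
    show ?thesis using t2.bd_det[OF c2 h(2) g(1)] h g by simp
  qed
  have un2: "b' = \<beta>" if "glued M n F1 F2 gl (j, b') (Suc i, \<gamma>)" for j b'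
  proof -
    have h: "j = i" "b' \<in> bdarts (M i) (F1 i)" "gl i (V i b') = V (Suc i) \<gamma>"
      "gl i (V i (alph (M i) b')) = V (Suc i) (alph (M (Suc i)) \<gamma>)"
      using that unfolding glued_def2 by auto
    have v1: "V i b' = u"
      using h(3) g(2) ginj ub t1.bd_bverts[OF c1 h(2)] by (auto dest: inj_onD)
    have v2: "V i (alph (M i) b') = u'"
      using h(4) g(3) ginj ub' t1.bd_bverts[OF c1 t1.bd_alph[OF c1 h(2)]] by (auto dest: inj_onD)
    show ?thesis using t1.bd_det[OF c1 h(2) b] v1 v2 unfolding u_def u'_def by simp
  qed
  have no1: "\<not> glued M n F1 F2 gl y (i, \<beta>)" for y
  proof
    assume h: "glued M n F1 F2 gl y (i, \<beta>)"
    obtain j h' where y: "y = (j, h')" by (cases y)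
    have "i = Suc j" "\<beta> \<in> bdarts (M i) (F2 j)" using h unfolding y glued_def2 by auto
    then have "0 < i" "\<beta> \<in> bdarts (M i) (F2 (i - 1))" by auto
    moreover have "cyclic_face (M i) (F2 (i - 1))" using glue[of "i - 1"] i \<open>0 < i\<close> by simp
    ultimately have "u \<in> bverts (M i) (F2 (i - 1))" unfolding u_def using t1.bd_bverts by blast
    then show False using dis[OF \<open>0 < i\<close> i] ub by blast
  qed
  have no2: "\<not> glued M n F1 F2 gl (Suc i, \<gamma>) y" for y
  proof
    assume h: "glued M n F1 F2 gl (Suc i, \<gamma>) y"
    obtain j h' where y: "y = (j, h')" by (cases y)
    have h2: "Suc (Suc i) < n" "\<gamma> \<in> bdarts (M (Suc i)) (F1 (Suc i))" using h unfolding y glued_def2 by auto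
    have "cyclic_face (M (Suc i)) (F1 (Suc i))" using glue[OF h2(1)] by simp
    then have "V (Suc i) \<gamma> \<in> bverts (M (Suc i)) (F1 (Suc i))" using t2.bd_bverts h2(2) by blast
    moreover have "V (Suc i) \<gamma> \<in> bverts (M (Suc i)) (F2 i)" using t2.bd_bverts[OF c2 g(1)] .
    ultimately show False using gl(4) h2(1) by blast
  qed
  have C1: "C i \<beta> = {(i, \<beta>), (Suc i, \<gamma>)}"
  proof
    show "C i \<beta> \<subseteq> {(i, \<beta>), (Suc i, \<gamma>)}"
    proof
      fix y assume "y \<in> C i \<beta>"
      then have "y = (i, \<beta>) \<or> glued M n F1 F2 gl (i, \<beta>) y" unfolding hcls_def2 using no1 by blast
      moreover obtain j k where y: "y = (j, k)" by (cases y)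
      moreover have "glued M n F1 F2 gl (i, \<beta>) (j, k) \<Longrightarrow> j = Suc i" unfolding glued_def2 by simp
      ultimately show "y \<in> {(i, \<beta>), (Suc i, \<gamma>)}" using un1 by auto
    qed
    show "{(i, \<beta>), (Suc i, \<gamma>)} \<subseteq> C i \<beta>" unfolding hcls_def2 using gl1 by auto
  qed
  have C2: "C (Suc i) \<gamma> = {(i, \<beta>), (Suc i, \<gamma>)}"
  proof
    show "C (Suc i) \<gamma> \<subseteq> {(i, \<beta>), (Suc i, \<gamma>)}"
    proof
      fix y assume "y \<in> C (Suc i) \<gamma>"
      then have "y = (Suc i, \<gamma>) \<or> glued M n F1 F2 gl y (Suc i, \<gamma>)" unfolding hcls_def2 using no2 by blast
      moreover obtain j k where y: "y = (j, k)" by (cases y)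
      moreover have "glued M n F1 F2 gl (j, k) (Suc i, \<gamma>) \<Longrightarrow> j = i" unfolding glued_def2 by simp
      ultimately show "y \<in> {(i, \<beta>), (Suc i, \<gamma>)}" using un2 by auto
    qed
    show "{(i, \<beta>), (Suc i, \<gamma>)} \<subseteq> C (Suc i) \<gamma>" unfolding hcls_def2 using gl1 by auto
  qed
  show ?thesis using C1 C2 g unfolding u_def by auto
qed


definition P1 where "P1 i = {{a, b} | a b. a \<in> D i \<and> b \<in> D i \<and> rot_adj (M i) a b \<and>
   \<not> (G i a \<and> G i b) \<and> {C i a, C i b} \<in> T}"
definition P2 where "P2 i = {{a, b} | a b. a \<in> D i \<and> b \<in> D i \<and> a \<noteq> b \<and> G i a \<and> G i b \<and>
   V i a = V i b \<and> \<not> Am i a \<and> \<not> Am i b}"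
definition TT where "TT i = P1 i \<union> P2 i"

lemma P1_mem: "p \<in> P1 i \<Longrightarrow> a \<in> p \<Longrightarrow> \<exists>b. p = {a, b} \<and> a \<in> D i \<and> b \<in> D i \<and> rot_adj (M i) a b \<and>
   \<not> (G i a \<and> G i b) \<and> {C i a, C i b} \<in> T"
proof -
  assume p: "p \<in> P1 i" and a: "a \<in> p"
  obtain x y where xy: "p = {x, y}" "x \<in> D i" "y \<in> D i" "rot_adj (M i) x y"
    "\<not> (G i x \<and> G i y)" "{C i x, C i y} \<in> T" using p unfolding P1_def by blast
  show ?thesis
  proof (cases "a = x")
    case True then show ?thesis using xy by blast
  next
    case False
    then have "a = y" using a xy(1) by simp
    then show ?thesis using xy rot_adj_sym[of "M i" x y]
      by (intro exI[of _ x]) (auto simp: insert_commute)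
  qed
qed

lemma P2_mem: "p \<in> P2 i \<Longrightarrow> a \<in> p \<Longrightarrow> \<exists>b. p = {a, b} \<and> a \<in> D i \<and> b \<in> D i \<and> a \<noteq> b \<and> G i a \<and> G i b \<and>
   V i a = V i b \<and> \<not> Am i a \<and> \<not> Am i b"
proof -
  assume p: "p \<in> P2 i" and a: "a \<in> p"
  obtain x y where xy: "p = {x, y}" "x \<in> D i" "y \<in> D i" "x \<noteq> y" "G i x" "G i y"
    "V i x = V i y" "\<not> Am i x" "\<not> Am i y" using p unfolding P2_def by blast
  show ?thesis
  proof (cases "a = x")
    case True then show ?thesis using xy by blast
  next
    case False
    then have "a = y" using a xy(1) by simp
    then show ?thesis using xy
      by (intro exI[of _ x]) (auto simp: insert_commute)
  qed
qed

lemma P1_gbd: "p \<in> P1 i \<Longrightarrow> \<exists>a\<in>p. \<not> G i a"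
  unfolding P1_def by auto

lemma P2_gbd: "p \<in> P2 i \<Longrightarrow> a \<in> p \<Longrightarrow> G i a"
  using P2_mem by blast

lemma bstruct3:
  assumes i: "i < n" and a: "a \<in> D i" and g: "G i a"
  shows "\<exists>\<beta>. (a = \<beta> \<or> a = R i \<beta>) \<and> \<beta> \<in> D i \<and> \<beta> \<noteq> R i \<beta> \<and> V i (R i \<beta>) = V i \<beta> \<and>
      (\<forall>x\<in>V i \<beta>. G i x \<longleftrightarrow> x = \<beta> \<or> x = R i \<beta>)"
proof -
  obtain f e where fe: "bface i f" "e \<in> f" "a = alph (M i) (Pd i e) \<or> a = e"
    using bstruct[OF i a g] by blast
  note s = bstruct2[OF fe(1,2)]
  show ?thesis
    by (rule exI[of _ "alph (M i) (Pd i e)"]) (use s fe(3) in auto)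
qed

lemma rot_adj_D: "i < n \<Longrightarrow> b \<in> D i \<Longrightarrow> b \<noteq> R i b"
  using tg.rot_neq[OF tgi] by metis

lemma smooth: assumes i: "i < n" shows "smooth_ts (M i) (TT i)"
  unfolding smooth_ts_def smooth_ts_gen_def
proof (intro conjI ballI)
  interpret t: tg "M i" "kk i" "ll i" using tgi[OF i] .
  fix p assume p: "p \<in> TT i"
  show "\<exists>a\<in>D i. \<exists>b\<in>D i. rot_adj (M i) a b \<and> p = {a, b}"
  proof (cases "p \<in> P1 i")
    case True
    then show ?thesis unfolding P1_def by blast
  next
    case False
    then have p2: "p \<in> P2 i" using p unfolding TT_def by blast
    then obtain a b where ab: "p = {a, b}" "a \<in> D i" "b \<in> D i" "a \<noteq> b" "G i a" "G i b" "V i a = V i b"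
      unfolding P2_def by blast
    obtain \<beta> where be: "a = \<beta> \<or> a = R i \<beta>" "\<beta> \<in> D i" "\<beta> \<noteq> R i \<beta>" "V i (R i \<beta>) = V i \<beta>"
      "\<forall>x\<in>V i \<beta>. G i x \<longleftrightarrow> x = \<beta> \<or> x = R i \<beta>" using bstruct3[OF i ab(2) ab(5)] by blast
    have "V i a = V i \<beta>" using be by auto
    then have "b \<in> V i \<beta>" using ab(7) t.self_vert by metis
    then have "b = \<beta> \<or> b = R i \<beta>" using be(5) ab(6) by blast
    then have "p = {\<beta>, R i \<beta>}" using ab be(1) by auto
    moreover have "rot_adj (M i) \<beta> (R i \<beta>)" using be(3) unfolding rot_adj_def by simp
    ultimately show ?thesis using be(2) t.rot_in[OF be(2)] by blast
  qed
next
  interpret t: tg "M i" "kk i" "ll i" using tgi[OF i] .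
  fix a assume a: "a \<in> D i"
  have uniqP1: "p = q" if pq: "p \<in> P1 i" "q \<in> P1 i" "a \<in> p" "a \<in> q" for p q
  proof -
    obtain b where b: "p = {a, b}" "{C i a, C i b} \<in> T" using P1_mem[OF pq(1,3)] by blast
    obtain b' where b': "q = {a, b'}" "{C i a, C i b'} \<in> T" using P1_mem[OF pq(2,4)] by blast
    have "{C i a, C i b} = {C i a, C i b'}" using T_uniq[OF C_in_H[OF i a] b(2) b'(2)] by simp
    then have "C i b = C i b'" by (rule set2_eq)
    then have "b = b'" by (rule C_inj)
    then show ?thesis using b b' by simp
  qed
  show "\<exists>!p. p \<in> TT i \<and> a \<in> p"
  proof (cases "G i a")
    case False
    have ex: "\<exists>p. p \<in> P1 i \<and> a \<in> p"
    proof -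
      obtain p where p: "p \<in> T" "C i a \<in> p" using T_ex[OF C_in_H[OF i a]] by blast
      obtain j d where jd: "j < n" "d \<in> D j" "\<not> (G j d \<and> G j (R j d))" "p = {C j d, C j (R j d)}"
        "C j d \<noteq> C j (R j d)" using T_adj[OF p(1)] by blast
      have "C j d = C i a \<or> C j (R j d) = C i a" using p(2) jd(4) by auto
      then show ?thesis
      proof
        assume "C j d = C i a"
        then have ji: "j = i" "d = a" using C_ng_eq[OF False] by auto
        have "{a, R i a} \<in> P1 i" unfolding P1_def
          using a t.rot_in[OF a] t.rot_neq[OF a] False p(1) jd(4) ji
          unfolding rot_adj_def by (intro CollectI exI[of _ a] exI[of _ "R i a"]) auto
        then show ?thesis by blast
      next
        assume "C j (R j d) = C i a"
        then have ji: "j = i" "R i d = a" using C_ng_eq[OF False] by auto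
        have "{d, a} \<in> P1 i" unfolding P1_def
          using jd(2) a t.rot_neq[of d] False p(1) jd(4) ji
          unfolding rot_adj_def by (intro CollectI exI[of _ d] exI[of _ a]) auto
        then show ?thesis by blast
      qed
    qed
    have "\<not> (p \<in> P2 i \<and> a \<in> p)" for p using P2_gbd False by blast
    then show ?thesis using ex uniqP1 unfolding TT_def by blast
  next
    case True
    obtain \<beta> where be: "a = \<beta> \<or> a = R i \<beta>" "\<beta> \<in> D i" "\<beta> \<noteq> R i \<beta>" "V i (R i \<beta>) = V i \<beta>"
      "\<forall>x\<in>V i \<beta>. G i x \<longleftrightarrow> x = \<beta> \<or> x = R i \<beta>" using bstruct3[OF i a True] by blast
    have par: "Am i \<beta> \<longleftrightarrow> Am i (R i \<beta>)" using parity[OF i be(2) be(5)] .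
    show ?thesis
    proof (cases "Am i a")
      case True
      then obtain x where x: "x \<in> D i" "rot_adj (M i) a x" "\<not> G i x" "{C i a, C i x} \<in> T"
        unfolding Am_def by blast
      have inP1: "{a, x} \<in> P1 i" unfolding P1_def using a x by blast
      have "\<not> (p \<in> P2 i \<and> a \<in> p)" for p using P2_mem True by blast
      then show ?thesis using inP1 uniqP1 unfolding TT_def by blast
    next
      case False
      then have nA: "\<not> Am i \<beta>" "\<not> Am i (R i \<beta>)" using par be(1) by auto
      have gb: "G i \<beta>" "G i (R i \<beta>)" using be(5) t.self_vert be(4) by (metis)+
      have inP2: "{\<beta>, R i \<beta>} \<in> P2 i" unfolding P2_def
        using be(2) t.rot_in[OF be(2)] be(3) gb be(4) nA by blast
      have n1: "\<not> (p \<in> P1 i \<and> a \<in> p)" for p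
      proof
        assume "p \<in> P1 i \<and> a \<in> p"
        then obtain b where "b \<in> D i" "rot_adj (M i) a b" "\<not> G i b" "{C i a, C i b} \<in> T"
          using P1_mem \<open>G i a\<close> by blast
        then show False using False unfolding Am_def by blast
      qed
      have u2: "p = {\<beta>, R i \<beta>}" if pa: "p \<in> P2 i" "a \<in> p" for p
      proof -
        obtain b where b: "p = {a, b}" "a \<noteq> b" "G i b" "V i a = V i b" using P2_mem[OF pa] by blast
        have "V i a = V i \<beta>" using be by auto
        then have "b \<in> V i \<beta>" using b(4) t.self_vert by metis
        then have "b = \<beta> \<or> b = R i \<beta>" using be(5) b(3) by blast
        then show ?thesis using b be(1) by auto
      qed
      show ?thesis
      proof (rule ex1I[of _ "{\<beta>, R i \<beta>}"])
        show "{\<beta>, R i \<beta>} \<in> TT i \<and> a \<in> {\<beta>, R i \<beta>}" using inP2 be(1) unfolding TT_def by auto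
        show "\<And>p. p \<in> TT i \<and> a \<in> p \<Longrightarrow> p = {\<beta>, R i \<beta>}" using n1 u2 unfolding TT_def by blast
      qed
    qed
  qed
qed


lemma ftrans_iff:
  assumes bf: "bface j f" and e: "e \<in> f"
  shows "bdarts (M j) f \<inter> V j e \<in> TT j \<longleftrightarrow> \<not> Am j (alph (M j) (Pd j e))"
proof -
  have j: "j < n" using bface_lt bf by blast
  interpret t: tg "M j" "kk j" "ll j" using tgi[OF j] .
  define \<beta> where "\<beta> = alph (M j) (Pd j e)"
  note s = bstruct2[OF bf e, folded \<beta>_def]
  have bd: "bdarts (M j) f \<inter> V j e = {\<beta>, e}" unfolding \<beta>_def using t.bd_vert[OF bface_cyc[OF bf] e] .
  have gb: "G j \<beta>" "G j e" using s(2,4,5,6,7) by auto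
  have par: "Am j \<beta> \<longleftrightarrow> Am j e" using parity[OF j s(1) s(7)] s(2) by simp
  have n1: "{\<beta>, e} \<notin> P1 j" using P1_gbd gb by blast
  have "{\<beta>, e} \<in> P2 j \<longleftrightarrow> \<not> Am j \<beta>"
  proof
    assume "{\<beta>, e} \<in> P2 j"
    then show "\<not> Am j \<beta>" using P2_mem by blast
  next
    assume h: "\<not> Am j \<beta>"
    have "e \<in> D j" using t.e_in[OF bface_cyc[OF bf] e] .
    then show "{\<beta>, e} \<in> P2 j" unfolding P2_def using s(1,3,4) gb h par
      by (intro CollectI exI[of _ \<beta>] exI[of _ e]) auto
  qed
  then show ?thesis using bd n1 unfolding TT_def \<beta>_def by auto
qed

lemma compat: "compatible M n F1 F2 gl TT"
  unfolding compatible_def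
proof (intro allI impI ballI)
  fix i v assume i: "Suc i < n" and v: "v \<in> bverts (M i) (F1 i)"
  have i0: "i < n" using i by simp
  interpret t1: tg "M i" "kk i" "ll i" using tgi[OF i0] .
  interpret t2: tg "M (Suc i)" "kk (Suc i)" "ll (Suc i)" using tgi[OF i] .
  obtain e where e: "e \<in> F1 i" "v = V i e" using v unfolding bverts_def by auto
  have bf1: "bface i (F1 i)" unfolding bface_def using i by simp
  have bf2: "bface (Suc i) (F2 i)" unfolding bface_def using i by simp
  define \<beta> where "\<beta> = alph (M i) (Pd i e)"
  note s1 = bstruct2[OF bf1 e(1), folded \<beta>_def]
  have f1: "ftrans (M i) (F1 i) (TT i) v \<longleftrightarrow> \<not> Am i \<beta>"
    unfolding ftrans_def e(2) \<beta>_def using ftrans_iff[OF bf1 e(1)] .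
  have bb: "\<beta> \<in> bdarts (M i) (F1 i)" using t1.bd_vert[OF bface_cyc[OF bf1] e(1)] \<beta>_def by auto
  obtain \<gamma> where g: "\<gamma> \<in> bdarts (M (Suc i)) (F2 i)" "C i \<beta> = {(i, \<beta>), (Suc i, \<gamma>)}"
    "C (Suc i) \<gamma> = C i \<beta>" "V (Suc i) \<gamma> = gl i (V i \<beta>)" using cls[OF i bb] by blast
  have gv: "V (Suc i) \<gamma> = gl i v" using g(4) s1(4) e(2) by simp
  have w: "gl i v \<in> bverts (M (Suc i)) (F2 i)"
    using glue[OF i] v unfolding cycle_iso_def bij_betw_def by auto
  obtain e2 where e2: "e2 \<in> F2 i" "gl i v = V (Suc i) e2" using w unfolding bverts_def by auto
  define \<beta>2 where "\<beta>2 = alph (M (Suc i)) (Pd (Suc i) e2)"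
  note s2 = bstruct2[OF bf2 e2(1), folded \<beta>2_def]
  have f2: "ftrans (M (Suc i)) (F2 i) (TT (Suc i)) (gl i v) \<longleftrightarrow> \<not> Am (Suc i) \<beta>2"
    unfolding ftrans_def e2(2) \<beta>2_def using ftrans_iff[OF bf2 e2(1)] .
  have "\<gamma> \<in> V (Suc i) e2" using gv e2(2) t2.self_vert by metis
  then have "\<gamma> \<in> {\<beta>2, e2}" using g(1) t2.bd_vert[OF bface_cyc[OF bf2] e2(1)] \<beta>2_def by auto
  moreover have "Am (Suc i) \<beta>2 \<longleftrightarrow> Am (Suc i) e2" using parity[OF i s2(1) s2(7)] s2(2) by simp
  ultimately have ag: "Am (Suc i) \<gamma> \<longleftrightarrow> Am (Suc i) \<beta>2" by auto
  have BH: "C i \<beta> \<in> H" using C_in_H[OF i0 s1(1)] .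
  have ne: "(i, \<beta>) \<noteq> (Suc i, \<gamma>)" by simp
  have key: "\<not> Am i \<beta> \<longleftrightarrow> Am (Suc i) \<gamma>"
  proof
    assume nA: "\<not> Am i \<beta>"
    obtain p where p: "p \<in> T" "C i \<beta> \<in> p" using T_ex[OF BH] by blast
    obtain j d where jd: "j < n" "d \<in> D j" "\<not> (G j d \<and> G j (R j d))" "p = {C j d, C j (R j d)}"
      using T_adj[OF p(1)] by blast
    have rn: "d \<noteq> R j d" using rot_adj_D[OF jd(1,2)] .
    have rd: "R j d \<in> D j" using tg.rot_in[OF tgi[OF jd(1)] jd(2)] .
    obtain y x where yx: "y \<in> D j" "x \<in> D j" "rot_adj (M j) y x" "C j y = C i \<beta>" "{C j y, C j x} \<in> T"
      "\<not> (G j y \<and> G j x)"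
    proof (cases "C j d = C i \<beta>")
      case True
      show ?thesis using that[of d "R j d"] True jd rd rn p(1) unfolding rot_adj_def by auto
    next
      case False
      then have "C j (R j d) = C i \<beta>" using p(2) jd(4) by auto
      then show ?thesis using that[of "R j d" d] jd rd rn p(1) unfolding rot_adj_def
        by (auto simp: insert_commute)
    qed
    have yB: "(j, y) \<in> C i \<beta>" using C_self yx(4) by metis
    have gy: "G j y"
    proof (rule ccontr)
      assume "\<not> G j y"
      then have "C i \<beta> = {(j, y)}" using C_single yx(4) by metis
      then show False using g(2) ne by (auto simp: doubleton_eq_iff)
    qed
    then have gx: "\<not> G j x" using yx(6) by blast
    have "(j, y) = (i, \<beta>) \<or> (j, y) = (Suc i, \<gamma>)" using yB g(2) by auto
    then show "Am (Suc i) \<gamma>"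
    proof
      assume "(j, y) = (i, \<beta>)"
      then have "Am i \<beta>" unfolding Am_def using yx gx by blast
      then show ?thesis using nA by simp
    next
      assume "(j, y) = (Suc i, \<gamma>)"
      then show ?thesis unfolding Am_def using yx gx by blast
    qed
  next
    assume A2: "Am (Suc i) \<gamma>"
    show "\<not> Am i \<beta>"
    proof
      assume A1: "Am i \<beta>"
      obtain x where x: "\<not> G i x" "{C i \<beta>, C i x} \<in> T" using A1 unfolding Am_def by blast
      obtain x' where x': "{C (Suc i) \<gamma>, C (Suc i) x'} \<in> T" using A2 unfolding Am_def by blast
      have "{C i \<beta>, C i x} = {C i \<beta>, C (Suc i) x'}" using T_uniq[OF BH x(2)] x' g(3) by simp
      then have "C (Suc i) x' = C i x" by (metis set2_eq)
      then have "Suc i = i \<and> x' = x" by (rule C_ng_eq[OF x(1)])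
      then show False by simp
    qed
  qed
  show "ftrans (M i) (F1 i) (TT i) v \<longleftrightarrow> \<not> ftrans (M (Suc i)) (F2 i) (TT (Suc i)) (gl i v)"
    using f1 f2 key ag by simp
qed

lemma csum_eq: "T = csum M n F1 F2 gl TT"
proof
  show "T \<subseteq> csum M n F1 F2 gl TT"
  proof
    fix p assume p: "p \<in> T"
    obtain j d where jd: "j < n" "d \<in> D j" "\<not> (G j d \<and> G j (R j d))" "p = {C j d, C j (R j d)}"
      using T_adj[OF p] by blast
    have rn: "d \<noteq> R j d" using rot_adj_D[OF jd(1,2)] .
    have rd: "R j d \<in> D j" using tg.rot_in[OF tgi[OF jd(1)] jd(2)] .
    have inP: "{d, R j d} \<in> TT j" unfolding TT_def P1_def using jd rd rn p unfolding rot_adj_def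
      by (intro UnI1 CollectI exI[of _ d] exI[of _ "R j d"]) auto
    show "p \<in> csum M n F1 F2 gl TT"
    proof (cases "G j d \<or> G j (R j d)")
      case False
      then have "p = hcls M n F1 F2 gl ` Pair j ` {d, R j d}" using jd(4) by simp
      then show ?thesis unfolding csum_def using jd(1) inP False
        by (intro UnI1 CollectI exI[of _ j] exI[of _ "{d, R j d}"]) auto
    next
      case True
      show ?thesis
      proof (cases "G j d")
        case True
        then have "\<not> G j (R j d)" using jd(3) by blast
        then show ?thesis unfolding csum_def using jd(1,4) inP True
          by (intro UnI2 CollectI exI[of _ j] exI[of _ d] exI[of _ "R j d"]) (auto simp: insert_commute)
      next
        case False
        then have "G j (R j d)" using \<open>G j d \<or> G j (R j d)\<close> by blast
        moreover have "{R j d, d} \<in> TT j" using inP by (simp add: insert_commute)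
        ultimately show ?thesis unfolding csum_def using jd(1,4) False
          by (intro UnI2 CollectI exI[of _ j] exI[of _ "R j d"] exI[of _ d]) auto
      qed
    qed
  qed
  show "csum M n F1 F2 gl TT \<subseteq> T"
  proof
    fix q assume "q \<in> csum M n F1 F2 gl TT"
    then consider (a) i p where "q = hcls M n F1 F2 gl ` Pair i ` p" "i < n" "p \<in> TT i"
        "\<forall>x\<in>p. \<not> G i x"
      | (b) i h s where "q = {C i s, C i h}" "i < n" "{h, s} \<in> TT i" "G i h" "\<not> G i s"
      unfolding csum_def by blast
    then show "q \<in> T"
    proof cases
      case a
      have "p \<in> P1 i"
      proof (rule ccontr)
        assume "p \<notin> P1 i"
        then have "p \<in> P2 i" using a(3) unfolding TT_def by blast
        then obtain x y where "p = {x, y}" "G i x" unfolding P2_def by blast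
        then show False using a(4) by simp
      qed
      then obtain x y where "p = {x, y}" "{C i x, C i y} \<in> T" unfolding P1_def by blast
      then show ?thesis using a(1) by simp
    next
      case b
      have "{h, s} \<notin> P2 i" using P2_gbd b(5) by blast
      then have "{h, s} \<in> P1 i" using b(3) unfolding TT_def by blast
      then obtain y where y: "{h, s} = {h, y}" "{C i h, C i y} \<in> T" using P1_mem by blast
      have "y = s" using set2_eq[OF y(1)] by simp
      then show ?thesis using y(2) b(1) by (simp add: insert_commute)
    qed
  qed
qed

end

theorem mainTheorem10:
  fixes M :: "nat \<Rightarrow> 'd cmap" and n :: nat
    and F1 F2 :: "nat \<Rightarrow> 'd set" and gl :: "nat \<Rightarrow> 'd set \<Rightarrow> 'd set"
    and T :: "(nat \<times> 'd) set set set"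
  assumes "\<forall>i<n. \<exists>k l. torus_grid (M i) k l"
    and "gluing_set M n F1 F2 gl"
    and "smooth_ts_gen (composite_halfedges M n F1 F2 gl) (composite_adj M n F1 F2 gl) T"
  shows "\<exists>TT. (\<forall>i<n. smooth_ts (M i) (TT i)) \<and> compatible M n F1 F2 gl TT \<and>
             T = csum M n F1 F2 gl TT"
proof -
  interpret s: setting M n F1 F2 gl T using assms by (simp add: setting_def)
  show ?thesis using s.smooth s.compat s.csum_eq by blast
qed

end
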